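(* Let $p>1$ and let $f:\mathbb{N}\to\mathbb{R}_{\geq 0}$ be a concave function with property $(C_p)$. Then there exists a constant $C$ (depending only on $f$ and $p$) such that for every finite subset $M=\{m_1,m_2,\dots,m_{2k}\}$ of $\mathbb{N}$ with $m_i<m_{i+1}$ for all $i$ and $m_1\geq 1$, \[ \sum_{i=1}^k \left(\frac{f(m_{2i})}{m_{2i}}\right)^p\frac{m_{2i}-m_{2i-1}}{m_{2i}} \leq C. \] Moreover, if in addition $m_{2i}\leq 2m_{2i-1}$ for each $i$, then \[ \sum_{i=1}^k \left(\frac{f(m_{2i-1})}{m_{2i-1}}\right)^p\frac{m_{2i}-m_{2i-1}}{m_{2i-1}} \leq 2^{p+1}C. \]
   Context: A function $f:\mathbb{N}\to\mathbb{R}_{\geq 0}$ is called concave if $f$ is non-decreasing and for all $m,n\in\mathbb{N}$ with $n\geq m$ one has $f(n+m)-f(n)\leq f(n)-f(n-m)$. Such an $f$ has property $(C_p)$ if $\sum_{n=1}^\infty \frac{1}{n}\left(\frac{f(n)}{n}\right)^p<\infty$. *)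

theory Defs
  imports Complex_Main
begin

text \<open>Concave function f : N -> R_{>=0} (here N includes 0, since the concavity
condition with n = m refers to f 0).\<close>
definition concave_fun :: "(nat \<Rightarrow> real) \<Rightarrow> bool" where
  "concave_fun f \<longleftrightarrow> (\<forall>n. f n \<ge> 0) \<and> mono f \<and>
     (\<forall>m n. n \<ge> m \<longrightarrow> f (n + m) - f n \<le> f n - f (n - m))"

definition prop_C :: "real \<Rightarrow> (nat \<Rightarrow> real) \<Rightarrow> bool" where
  "prop_C p f \<longleftrightarrow> summable (\<lambda>n. (1 / real (Suc n)) * (f (Suc n) / real (Suc n)) powr p)"

end

theory Submission
  imports Defs
begin

lemma conc_step:
  assumes "concave_fun f" "1 \<le> n"
  shows "f (Suc n) - f n \<le> f n - f (n - 1)"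
proof -
  have "\<forall>m n. n \<ge> m \<longrightarrow> f (n + m) - f n \<le> f n - f (n - m)"
    using assms(1) unfolding concave_fun_def by (elim conjE)
  then have "f (n + 1) - f n \<le> f n - f (n - 1)" using assms(2) by blast
  then show ?thesis by simp
qed

lemma diff_mono_aux:
  assumes "concave_fun f" "1 \<le> j" "j \<le> n"
  shows "f (Suc n) - f n \<le> f j - f (j - 1)"
  using assms(3)
proof (induction n rule: dec_induct)
  case base
  then show ?case using conc_step[OF assms(1,2)] .
next
  case (step n)
  have "f (Suc (Suc n)) - f (Suc n) \<le> f (Suc n) - f (Suc n - 1)"
    using conc_step[OF assms(1), of "Suc n"] by simp
  then show ?case using step by simp
qed

lemma ratio_step:
  assumes "concave_fun f" "1 \<le> n"
  shows "f (Suc n) / real (Suc n) \<le> f n / real n"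
proof -
  have "(\<Sum>j<n. f (Suc n) - f n) \<le> (\<Sum>j<n. f (Suc j) - f j)"
  proof (rule sum_mono)
    fix j assume "j \<in> {..<n}"
    then have "Suc j \<le> n" by simp
    from diff_mono_aux[OF assms(1) _ this] show "f (Suc n) - f n \<le> f (Suc j) - f j" by simp
  qed
  also have "\<dots> = f n - f 0" by (rule sum_lessThan_telescope)
  finally have A: "real n * (f (Suc n) - f n) \<le> f n - f 0" by simp
  have "f 0 \<ge> 0" using assms(1) unfolding concave_fun_def by (elim conjE) simp
  with A have B: "real n * f (Suc n) \<le> (real n + 1) * f n" by (simp add: algebra_simps)
  have np: "real n > 0" using assms(2) by simp
  have "f (Suc n) / real (Suc n) = (real n * f (Suc n)) / (real n * (real n + 1))"
    using np by simp
  also have "\<dots> \<le> ((real n + 1) * f n) / (real n * (real n + 1))"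
    using B np by (intro divide_right_mono) auto
  also have "\<dots> = f n / real n" using np by simp
  finally show ?thesis .
qed

lemma ratio_mono:
  assumes "concave_fun f" "1 \<le> n" "n \<le> n'"
  shows "f n' / real n' \<le> f n / real n"
  using assms(3)
proof (induction n' rule: dec_induct)
  case base then show ?case by simp
next
  case (step k)
  have "f (Suc k) / real (Suc k) \<le> f k / real k"
    using ratio_step[OF assms(1)] step assms(2) by simp
  then show ?case using step by linarith
qed

lemma term_bound:
  assumes "concave_fun f" "p \<ge> 0" "a < b"
  shows "(f b / real b) powr p * (real b - real a) / real b
         \<le> (\<Sum>j\<in>{a..<b}. (1 / real (Suc j)) * (f (Suc j) / real (Suc j)) powr p)"
proof -
  have nn: "\<And>n. f n \<ge> 0" using assms(1) unfolding concave_fun_def by blast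
  have "(\<Sum>j\<in>{a..<b}. (f b / real b) powr p / real b)
        \<le> (\<Sum>j\<in>{a..<b}. (1 / real (Suc j)) * (f (Suc j) / real (Suc j)) powr p)"
  proof (rule sum_mono)
    fix j assume j: "j \<in> {a..<b}"
    have h: "f b / real b \<le> f (Suc j) / real (Suc j)"
      using ratio_mono[OF assms(1), of "Suc j" b] j by simp
    have h0: "0 \<le> f b / real b" using nn by simp
    have pw: "(f b / real b) powr p \<le> (f (Suc j) / real (Suc j)) powr p"
      using powr_mono2[OF assms(2) h0 h] .
    have "(f b / real b) powr p / real b \<le> (f b / real b) powr p / real (Suc j)"
      using j by (intro divide_left_mono) auto
    also have "\<dots> \<le> (f (Suc j) / real (Suc j)) powr p / real (Suc j)"
      using pw by (intro divide_right_mono) auto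
    finally show "(f b / real b) powr p / real b
        \<le> (1 / real (Suc j)) * (f (Suc j) / real (Suc j)) powr p" by simp
  qed
  moreover have "(\<Sum>j\<in>{a..<b}. (f b / real b) powr p / real b)
      = (f b / real b) powr p * (real b - real a) / real b"
  proof -
    have "real (b - a) = real b - real a" using assms(3) by simp
    then show ?thesis by simp
  qed
  ultimately show ?thesis by linarith
qed

lemma part1:
  assumes "concave_fun f" "p \<ge> 0"
  shows "(\<forall>i. 1 \<le> i \<and> i < 2 * k \<longrightarrow> m i < m (Suc i)) \<longrightarrow>
       (\<Sum>i=1..k. (f (m (2*i)) / real (m (2*i))) powr p
                   * (real (m (2*i)) - real (m (2*i - 1))) / real (m (2*i)))
     \<le> (\<Sum>j<(if k = 0 then 0 else m (2*k)). (1 / real (Suc j)) * (f (Suc j) / real (Suc j)) powr p)"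
proof (induction k)
  case 0 then show ?case by simp
next
  case (Suc k)
  let ?F = "\<lambda>j. (1 / real (Suc j)) * (f (Suc j) / real (Suc j)) powr p"
  have Fnn: "\<And>j. ?F j \<ge> 0" by simp
  show ?case
  proof
    assume H: "\<forall>i. 1 \<le> i \<and> i < 2 * Suc k \<longrightarrow> m i < m (Suc i)"
    have H': "\<forall>i. 1 \<le> i \<and> i < 2 * k \<longrightarrow> m i < m (Suc i)" using H by auto
    have IH: "(\<Sum>i=1..k. (f (m (2*i)) / real (m (2*i))) powr p
                   * (real (m (2*i)) - real (m (2*i - 1))) / real (m (2*i)))
       \<le> sum ?F {..<(if k = 0 then 0 else m (2*k))}" using Suc H' by blast
    define N where "N = (if k = 0 then 0 else m (2*k))"
    have N1: "N \<le> m (Suc (2*k))"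
    proof (cases "k = 0")
      case False
      then have "m (2*k) < m (Suc (2*k))" using H by auto
      then show ?thesis using False unfolding N_def by simp
    qed (simp add: N_def)
    have ab: "m (Suc (2*k)) < m (Suc (Suc (2*k)))" using H by auto
    have "sum ?F {..<N} \<le> sum ?F {..<m (Suc (2*k))}"
      using N1 by (intro sum_mono2) auto
    have split1: "sum ?F {..<m (Suc (Suc (2*k)))} = sum ?F {..<m (Suc (2*k))} + sum ?F {m (Suc (2*k))..<m (Suc (Suc (2*k)))}"
      using ab by (metis (no_types, lifting) less_imp_le_nat sum.atLeastLessThan_concat lessThan_atLeast0 le0)
    note tb = term_bound[OF assms(1,2) ab]
    have "sum ?F {..<N} \<le> sum ?F {..<m (Suc (2*k))}"
      using N1 by (intro sum_mono2) auto
    have eq2: "2 * Suc k = Suc (Suc (2*k))" "2 * Suc k - 1 = Suc (2*k)" by simp_all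
    show "(\<Sum>i=1..Suc k. (f (m (2*i)) / real (m (2*i))) powr p
                   * (real (m (2*i)) - real (m (2*i - 1))) / real (m (2*i)))
       \<le> sum ?F {..<(if Suc k = 0 then 0 else m (2*Suc k))}"
      using IH tb split1 \<open>sum ?F {..<N} \<le> sum ?F {..<m (Suc (2*k))}\<close>
      unfolding N_def eq2 by simp
  qed
qed

theorem lemma2p3:
  fixes p :: real and f :: "nat \<Rightarrow> real"
  assumes "p > 1" and "concave_fun f" and "prop_C p f"
  shows "\<exists>C::real.
    (\<forall>(k::nat) (m::nat \<Rightarrow> nat).
       (\<forall>i. 1 \<le> i \<and> i < 2 * k \<longrightarrow> m i < m (Suc i)) \<and> m 1 \<ge> 1 \<longrightarrow>
       (\<Sum>i=1..k. (f (m (2*i)) / real (m (2*i))) powr p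
                   * (real (m (2*i)) - real (m (2*i - 1))) / real (m (2*i))) \<le> C) \<and>
    (\<forall>(k::nat) (m::nat \<Rightarrow> nat).
       (\<forall>i. 1 \<le> i \<and> i < 2 * k \<longrightarrow> m i < m (Suc i)) \<and> m 1 \<ge> 1 \<and>
       (\<forall>i\<in>{1..k}. m (2*i) \<le> 2 * m (2*i - 1)) \<longrightarrow>
       (\<Sum>i=1..k. (f (m (2*i - 1)) / real (m (2*i - 1))) powr p
                   * (real (m (2*i)) - real (m (2*i - 1))) / real (m (2*i - 1)))
         \<le> 2 powr (p + 1) * C)"
proof -
  let ?F = "\<lambda>j. (1 / real (Suc j)) * (f (Suc j) / real (Suc j)) powr p"
  have sF: "summable ?F" using assms(3) unfolding prop_C_def .
  have p0: "p \<ge> 0" using assms(1) by simp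
  have nn: "\<And>n. f n \<ge> 0" using assms(2) unfolding concave_fun_def by blast
  have mo: "mono f" using assms(2) unfolding concave_fun_def by blast
  have P1: "(\<Sum>i=1..k. (f (m (2*i)) / real (m (2*i))) powr p
                   * (real (m (2*i)) - real (m (2*i - 1))) / real (m (2*i))) \<le> suminf ?F"
    if H: "\<forall>i. 1 \<le> i \<and> i < 2 * k \<longrightarrow> m i < m (Suc i)" for k :: nat and m :: "nat \<Rightarrow> nat"
  proof -
    have "(\<Sum>i=1..k. (f (m (2*i)) / real (m (2*i))) powr p
                   * (real (m (2*i)) - real (m (2*i - 1))) / real (m (2*i)))
     \<le> sum ?F {..<(if k = 0 then 0 else m (2*k))}" using part1[OF assms(2) p0] H by blast
    also have "\<dots> \<le> suminf ?F" by (rule sum_le_suminf[OF sF]) auto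
    finally show ?thesis .
  qed
  show ?thesis
  proof (intro exI conjI allI impI)
    fix k :: nat and m :: "nat \<Rightarrow> nat"
    assume "(\<forall>i. 1 \<le> i \<and> i < 2 * k \<longrightarrow> m i < m (Suc i)) \<and> m 1 \<ge> 1"
    then show "(\<Sum>i=1..k. (f (m (2*i)) / real (m (2*i))) powr p
                   * (real (m (2*i)) - real (m (2*i - 1))) / real (m (2*i))) \<le> suminf ?F"
      using P1 by blast
  next
    fix k :: nat and m :: "nat \<Rightarrow> nat"
    assume A: "(\<forall>i. 1 \<le> i \<and> i < 2 * k \<longrightarrow> m i < m (Suc i)) \<and> m 1 \<ge> 1 \<and>
       (\<forall>i\<in>{1..k}. m (2*i) \<le> 2 * m (2*i - 1))"
    have "(\<Sum>i=1..k. (f (m (2*i - 1)) / real (m (2*i - 1))) powr p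
                   * (real (m (2*i)) - real (m (2*i - 1))) / real (m (2*i - 1)))
       \<le> (\<Sum>i=1..k. 2 powr (p + 1) * ((f (m (2*i)) / real (m (2*i))) powr p
                   * (real (m (2*i)) - real (m (2*i - 1))) / real (m (2*i))))"
    proof (rule sum_mono)
      fix i assume i: "i \<in> {1..k}"
      define a where "a = m (2*i - 1)"
      define b where "b = m (2*i)"
      have ab: "a < b"
      proof -
        have "1 \<le> 2*i-1 \<and> 2*i-1 < 2*k" using i by auto
        then have "m (2*i-1) < m (Suc (2*i-1))" using A by blast
        moreover have "Suc (2*i-1) = 2*i" using i by auto
        ultimately show ?thesis unfolding a_def b_def by simp
      qed
      have b2: "b \<le> 2 * a" using A i unfolding a_def b_def by blast
      have a1: "a \<ge> 1" using ab b2 by linarith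
      have fab: "f a \<le> f b" using mo ab by (simp add: monoD)
      have h1: "f a / real a \<le> 2 * (f b / real b)"
      proof -
        have "f a / real a \<le> f b / real a" using fab a1 by (simp add: divide_right_mono)
        also have "\<dots> \<le> 2 * (f b / real b)"
        proof -
          have "real b \<le> 2 * real a" using b2 by linarith
          then have "real b * f b \<le> (2 * real a) * f b" using nn[of b] by (rule mult_right_mono)
          then show ?thesis using a1 ab by (simp add: field_simps)
        qed
        finally show ?thesis .
      qed
      have pw: "(f a / real a) powr p \<le> 2 powr p * (f b / real b) powr p"
      proof -
        have "(f a / real a) powr p \<le> (2 * (f b / real b)) powr p"
          using powr_mono2[OF p0 _ h1] nn[of a] by simp
        also have "\<dots> = 2 powr p * (f b / real b) powr p"
          using nn[of b] by (intro powr_mult)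
        finally show ?thesis .
      qed
      have q: "(real b - real a) / real a \<le> 2 * ((real b - real a) / real b)"
      proof -
        have r1: "real b \<le> 2 * real a" using b2 by linarith
        have r2: "real a < real b" using ab by simp
        have "(real b - real a) * real b \<le> (real b - real a) * (2 * real a)"
          using r1 r2 by (intro mult_left_mono) auto
        then show ?thesis using a1 r2 by (simp add: field_simps)
      qed
      have "(f a / real a) powr p * (real b - real a) / real a
          = (f a / real a) powr p * ((real b - real a) / real a)" by simp
      also have "\<dots> \<le> (2 powr p * (f b / real b) powr p) * (2 * ((real b - real a) / real b))"
        using pw q ab by (intro mult_mono) auto
      also have "\<dots> = 2 powr (p + 1) * ((f b / real b) powr p * (real b - real a) / real b)"
        by (simp add: powr_add)
      finally show "(f (m (2*i - 1)) / real (m (2*i - 1))) powr p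
                   * (real (m (2*i)) - real (m (2*i - 1))) / real (m (2*i - 1))
         \<le> 2 powr (p + 1) * ((f (m (2*i)) / real (m (2*i))) powr p
                   * (real (m (2*i)) - real (m (2*i - 1))) / real (m (2*i)))"
        unfolding a_def b_def .
    qed
    also have "\<dots> = 2 powr (p + 1) * (\<Sum>i=1..k. (f (m (2*i)) / real (m (2*i))) powr p
                   * (real (m (2*i)) - real (m (2*i - 1))) / real (m (2*i)))"
      by (simp add: sum_distrib_left)
    also have "\<dots> \<le> 2 powr (p + 1) * suminf ?F"
      using P1 A by (intro mult_left_mono) auto
    finally show "(\<Sum>i=1..k. (f (m (2*i - 1)) / real (m (2*i - 1))) powr p
                   * (real (m (2*i)) - real (m (2*i - 1))) / real (m (2*i - 1)))
         \<le> 2 powr (p + 1) * suminf ?F" .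
  qed
qed

end
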